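(* Let $G$ be a group with nontrivial center $Z(G)\neq\{1\}$. Then for every subgroup $A\subseteq\operatorname{Aut}(G)$, the $\mathcal{L}(A)$-group $G$ is not an $\mathcal{L}(A)$-equational domain.
   Context: For a subgroup $A\subseteq\operatorname{Aut}(G)$, $\mathcal{L}(A)=\{\cdot,{}^{-1},1\}\cup\{\phi\mid\phi\in A\}$ is the group language with a unary function symbol for each $\phi\in A$, interpreted as $\phi$. $\mathcal{L}(A)$-equations are $t(X)=1$ with $t$ an $\mathcal{L}(A)$-term (equivalently a product $\phi_1(x_{i_1}^{\varepsilon_1})\cdots\phi_k(x_{i_k}^{\varepsilon_k})$, $\phi_j\in A$, $\varepsilon_j=\pm1$); systems are arbitrary sets of equations and $V_G(S)$ is the solution set. A subset of $G^n$ is $\mathcal{L}(A)$-algebraic if it is $V_G(S)$ for some $\mathcal{L}(A)$-system $S$ in $n$ variables. $G$ is an $\mathcal{L}(A)$-equational domain if for every $n$ the union of any two $\mathcal{L}(A)$-algebraic subsets of $G^n$ is $\mathcal{L}(A)$-algebraic. *)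

theory Defs
  imports "HOL-Algebra.Algebra"
begin

definition group_center :: "('a, 'b) monoid_scheme \<Rightarrow> 'a set" where
  "group_center G = {z \<in> carrier G. \<forall>g \<in> carrier G. z \<otimes>\<^bsub>G\<^esub> g = g \<otimes>\<^bsub>G\<^esub> z}"

text \<open>Terms of the language L(A): group terms with a unary function symbol for each
  automorphism; variables are indexed by natural numbers.\<close>
datatype 'a lterm =
    LVar nat
  | LOne
  | LMul "'a lterm" "'a lterm"
  | LInv "'a lterm"
  | LApp "'a \<Rightarrow> 'a" "'a lterm"

fun lterm_ok :: "('a \<Rightarrow> 'a) set \<Rightarrow> nat \<Rightarrow> 'a lterm \<Rightarrow> bool" where
  "lterm_ok A n (LVar i) = (i < n)"
| "lterm_ok A n LOne = True"
| "lterm_ok A n (LMul s t) = (lterm_ok A n s \<and> lterm_ok A n t)"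
| "lterm_ok A n (LInv t) = lterm_ok A n t"
| "lterm_ok A n (LApp \<phi> t) = (\<phi> \<in> A \<and> lterm_ok A n t)"

fun leval :: "('a, 'b) monoid_scheme \<Rightarrow> 'a list \<Rightarrow> 'a lterm \<Rightarrow> 'a" where
  "leval G xs (LVar i) = xs ! i"
| "leval G xs LOne = \<one>\<^bsub>G\<^esub>"
| "leval G xs (LMul s t) = leval G xs s \<otimes>\<^bsub>G\<^esub> leval G xs t"
| "leval G xs (LInv t) = inv\<^bsub>G\<^esub> (leval G xs t)"
| "leval G xs (LApp \<phi> t) = \<phi> (leval G xs t)"

definition gpower :: "('a, 'b) monoid_scheme \<Rightarrow> nat \<Rightarrow> 'a list set" where
  "gpower G n = {xs. length xs = n \<and> set xs \<subseteq> carrier G}"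

text \<open>An L(A)-system in n variables: an arbitrary set of equations t = 1 (represented by t).\<close>
definition lsystem :: "('a \<Rightarrow> 'a) set \<Rightarrow> nat \<Rightarrow> 'a lterm set \<Rightarrow> bool" where
  "lsystem A n S \<longleftrightarrow> (\<forall>t \<in> S. lterm_ok A n t)"

definition solset :: "('a, 'b) monoid_scheme \<Rightarrow> nat \<Rightarrow> 'a lterm set \<Rightarrow> 'a list set" where
  "solset G n S = {xs \<in> gpower G n. \<forall>t \<in> S. leval G xs t = \<one>\<^bsub>G\<^esub>}"

definition algebraic :: "('a, 'b) monoid_scheme \<Rightarrow> ('a \<Rightarrow> 'a) set \<Rightarrow> nat \<Rightarrow> 'a list set \<Rightarrow> bool" where
  "algebraic G A n Y \<longleftrightarrow> (\<exists>S. lsystem A n S \<and> Y = solset G n S)"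

definition equational_domain :: "('a, 'b) monoid_scheme \<Rightarrow> ('a \<Rightarrow> 'a) set \<Rightarrow> bool" where
  "equational_domain G A \<longleftrightarrow>
     (\<forall>n Y1 Y2. algebraic G A n Y1 \<and> algebraic G A n Y2 \<longrightarrow> algebraic G A n (Y1 \<union> Y2))"

end

theory Submission
  imports Defs
begin

lemma auto_facts:
  assumes "subgroup A (AutoGroup G)" "\<phi> \<in> A"
  shows "\<phi> \<in> hom G G" "\<phi> ` carrier G = carrier G"
proof -
  have "\<phi> \<in> auto G" using assms subgroup.subset[OF assms(1)]
    by (auto simp: AutoGroup_def BijGroup_def)
  then show "\<phi> \<in> hom G G" "\<phi> ` carrier G = carrier G"
    by (auto simp: auto_def Bij_def bij_betw_def)
qed

lemma center_aut:
  assumes G: "group G" and A: "subgroup A (AutoGroup G)" "\<phi> \<in> A"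
    and c: "c \<in> group_center G"
  shows "\<phi> c \<in> group_center G"
proof -
  have h: "\<phi> \<in> hom G G" and s: "\<phi> ` carrier G = carrier G" using auto_facts[OF A] by auto
  have cc: "c \<in> carrier G" using c by (simp add: group_center_def)
  have pc: "\<phi> c \<in> carrier G" using h cc by (simp add: hom_in_carrier)
  have "\<phi> c \<otimes>\<^bsub>G\<^esub> g = g \<otimes>\<^bsub>G\<^esub> \<phi> c" if g: "g \<in> carrier G" for g
  proof -
    obtain k where k: "k \<in> carrier G" "g = \<phi> k" using g s by blast
    have "\<phi> c \<otimes>\<^bsub>G\<^esub> \<phi> k = \<phi> (c \<otimes>\<^bsub>G\<^esub> k)" using h cc k by (simp add: hom_mult)
    also have "\<dots> = \<phi> (k \<otimes>\<^bsub>G\<^esub> c)" using c k by (simp add: group_center_def)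
    also have "\<dots> = \<phi> k \<otimes>\<^bsub>G\<^esub> \<phi> c" using h cc k by (simp add: hom_mult)
    finally show ?thesis using k by simp
  qed
  then show ?thesis using pc by (simp add: group_center_def)
qed

lemma key:
  fixes G (structure)
  assumes G: "group G" and A: "subgroup A (AutoGroup G)"
    and z: "z \<in> group_center G" and y: "y \<in> carrier G"
  shows "lterm_ok A 2 t \<Longrightarrow>
     leval G [z,y] t = leval G [z,\<one>\<^bsub>G\<^esub>] t \<otimes>\<^bsub>G\<^esub> leval G [\<one>\<^bsub>G\<^esub>,y] t
     \<and> leval G [z,\<one>\<^bsub>G\<^esub>] t \<in> group_center G \<and> leval G [\<one>\<^bsub>G\<^esub>,y] t \<in> carrier G"
proof (induction t)
  case (LVar i)
  have zc: "z \<in> carrier G" using z by (simp add: group_center_def)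
  have one: "\<one>\<^bsub>G\<^esub> \<in> group_center G" using G by (simp add: group_center_def group.is_monoid)
  from LVar have "i = 0 \<or> i = 1" by auto
  then show ?case using G zc y z one by (auto simp: group.is_monoid)
next
  case LOne
  then show ?case using G by (simp add: group_center_def group.is_monoid)
next
  case (LMul s t)
  interpret group G by fact
  from LMul have s: "leval G [z, y] s = leval G [z, \<one>] s \<otimes> leval G [\<one>, y] s"
    "leval G [z, \<one>] s \<in> group_center G" "leval G [\<one>, y] s \<in> carrier G"
    and t: "leval G [z, y] t = leval G [z, \<one>] t \<otimes> leval G [\<one>, y] t"
    "leval G [z, \<one>] t \<in> group_center G" "leval G [\<one>, y] t \<in> carrier G" by auto
  define a where "a = leval G [z, \<one>] s"
  define b where "b = leval G [\<one>, y] s"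
  define c where "c = leval G [z, \<one>] t"
  define d where "d = leval G [\<one>, y] t"
  have ac: "a \<in> carrier G" "c \<in> carrier G" using s t by (auto simp: a_def c_def group_center_def)
  have bd: "b \<in> carrier G" "d \<in> carrier G" using s t by (auto simp: b_def d_def)
  have cb: "c \<otimes> b = b \<otimes> c" using t(2) bd by (auto simp: c_def group_center_def)
  have eq: "(a \<otimes> b) \<otimes> (c \<otimes> d) = (a \<otimes> c) \<otimes> (b \<otimes> d)"
  proof -
    have "(a \<otimes> b) \<otimes> (c \<otimes> d) = a \<otimes> ((b \<otimes> c) \<otimes> d)" using ac bd by (simp add: m_assoc)
    also have "\<dots> = a \<otimes> ((c \<otimes> b) \<otimes> d)" using cb by simp
    also have "\<dots> = (a \<otimes> c) \<otimes> (b \<otimes> d)" using ac bd by (simp add: m_assoc)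
    finally show ?thesis .
  qed
  have ctr: "a \<otimes> c \<in> group_center G"
    unfolding group_center_def
  proof (intro CollectI conjI ballI)
    show "a \<otimes> c \<in> carrier G" using ac by simp
    fix g assume g: "g \<in> carrier G"
    have "a \<otimes> g = g \<otimes> a" "c \<otimes> g = g \<otimes> c" using s(2) t(2) g
      by (auto simp: a_def c_def group_center_def)
    then show "a \<otimes> c \<otimes> g = g \<otimes> (a \<otimes> c)" using ac g
    proof -
      assume e: "a \<otimes> g = g \<otimes> a" "c \<otimes> g = g \<otimes> c"
      have "a \<otimes> c \<otimes> g = a \<otimes> (g \<otimes> c)" using ac g e(2) by (simp add: m_assoc)
      also have "\<dots> = (g \<otimes> a) \<otimes> c" using ac g e(1) by (simp flip: m_assoc)
      also have "\<dots> = g \<otimes> (a \<otimes> c)" using ac g by (simp add: m_assoc)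
      finally show ?thesis .
    qed
  qed
  show ?case using s t eq ctr bd
    by (simp add: a_def b_def c_def d_def)
next
  case (LInv t)
  interpret group G by fact
  from LInv have t: "leval G [z, y] t = leval G [z, \<one>] t \<otimes> leval G [\<one>, y] t"
    "leval G [z, \<one>] t \<in> group_center G" "leval G [\<one>, y] t \<in> carrier G" by auto
  define a where "a = leval G [z, \<one>] t"
  define b where "b = leval G [\<one>, y] t"
  have a: "a \<in> carrier G" using t by (auto simp: a_def group_center_def)
  have b: "b \<in> carrier G" using t by (auto simp: b_def)
  have ab: "a \<otimes> b = b \<otimes> a" using t(2) b by (auto simp: a_def group_center_def)
  have ctr: "inv a \<in> group_center G"
    unfolding group_center_def
  proof (intro CollectI conjI ballI)
    show "inv a \<in> carrier G" using a by simp
    fix g assume g: "g \<in> carrier G"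
    have "a \<otimes> inv g = inv g \<otimes> a" using t(2) g by (auto simp: a_def group_center_def)
    then have "inv (a \<otimes> inv g) = inv (inv g \<otimes> a)" by simp
    then show "inv a \<otimes> g = g \<otimes> inv a" using a g by (simp add: inv_mult_group)
  qed
  have "inv (a \<otimes> b) = inv (b \<otimes> a)" using ab by simp
  then have "inv (a \<otimes> b) = inv a \<otimes> inv b" using a b by (simp add: inv_mult_group)
  then show ?case using t ctr b by (simp add: a_def b_def)
next
  case (LApp \<phi> t)
  interpret group G by fact
  from LApp have ph: "\<phi> \<in> A" and t: "leval G [z, y] t = leval G [z, \<one>] t \<otimes> leval G [\<one>, y] t"
    "leval G [z, \<one>] t \<in> group_center G" "leval G [\<one>, y] t \<in> carrier G" by auto
  have h: "\<phi> \<in> hom G G" using auto_facts[OF A ph] by simp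
  have a: "leval G [z, \<one>] t \<in> carrier G" using t by (auto simp: group_center_def)
  have "\<phi> (leval G [z, y] t) = \<phi> (leval G [z, \<one>] t) \<otimes> \<phi> (leval G [\<one>, y] t)"
    using t(1) t(3) a h by (simp add: hom_mult)
  moreover have "\<phi> (leval G [z, \<one>] t) \<in> group_center G" using center_aut[OF G A ph t(2)] .
  moreover have "\<phi> (leval G [\<one>, y] t) \<in> carrier G" using h t(3) by (simp add: hom_in_carrier)
  ultimately show ?case unfolding leval.simps by blast
qed

theorem corollary1:
  fixes G :: "('a, 'b) monoid_scheme" and A :: "('a \<Rightarrow> 'a) set"
  assumes "group G"
    and "group_center G \<noteq> {\<one>\<^bsub>G\<^esub>}"
    and "subgroup A (AutoGroup G)"
  shows "\<not> equational_domain G A"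
proof
  assume ed: "equational_domain G A"
  interpret group G by fact
  have one: "\<one>\<^bsub>G\<^esub> \<in> group_center G" by (simp add: group_center_def)
  obtain z where z: "z \<in> group_center G" "z \<noteq> \<one>\<^bsub>G\<^esub>" using assms(2) one by blast
  have zc: "z \<in> carrier G" using z by (simp add: group_center_def)
  have a1: "algebraic G A 2 (solset G 2 {LVar 0})"
    unfolding algebraic_def lsystem_def by (intro exI[of _ "{LVar 0}"]) auto
  have a2: "algebraic G A 2 (solset G 2 {LVar 1})"
    unfolding algebraic_def lsystem_def by (intro exI[of _ "{LVar 1}"]) auto
  obtain S where S: "lsystem A 2 S"
    and eqS: "solset G 2 {LVar 0} \<union> solset G 2 {LVar 1} = solset G 2 S"
  proof -
    have "algebraic G A 2 (solset G 2 {LVar 0} \<union> solset G 2 {LVar 1})"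
      using ed a1 a2 unfolding equational_domain_def by blast
    then show ?thesis using that unfolding algebraic_def by blast
  qed
  have "[z,z] \<in> solset G 2 S"
    unfolding solset_def
  proof (intro CollectI conjI ballI)
    show "[z,z] \<in> gpower G 2" using zc by (simp add: gpower_def)
    fix t assume t: "t \<in> S"
    have "[z,\<one>\<^bsub>G\<^esub>] \<in> solset G 2 {LVar 1}" using zc by (simp add: solset_def gpower_def)
    then have "[z,\<one>\<^bsub>G\<^esub>] \<in> solset G 2 S" using eqS by blast
    then have e1: "leval G [z,\<one>\<^bsub>G\<^esub>] t = \<one>\<^bsub>G\<^esub>" using t unfolding solset_def by blast
    have "[\<one>\<^bsub>G\<^esub>,z] \<in> solset G 2 {LVar 0}" using zc by (simp add: solset_def gpower_def)
    then have "[\<one>\<^bsub>G\<^esub>,z] \<in> solset G 2 S" using eqS by blast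
    then have e2: "leval G [\<one>\<^bsub>G\<^esub>,z] t = \<one>\<^bsub>G\<^esub>" using t unfolding solset_def by blast
    have "lterm_ok A 2 t" using S t by (simp add: lsystem_def)
    from key[OF assms(1) assms(3) z(1) zc this]
    show "leval G [z,z] t = \<one>\<^bsub>G\<^esub>" using e1 e2 by simp
  qed
  then have "[z,z] \<in> solset G 2 {LVar 0} \<union> solset G 2 {LVar 1}" using eqS by simp
  then show False using z(2) by (auto simp: solset_def)
qed

end
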